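(* Let $q$ be a prime power, $\varepsilon=\pm1$, and let $T$ be a maximal torus of $\operatorname{SL}_n(\varepsilon q)$ parameterized by the partition $n=n_1+\ldots+n_s$. Let $t=(n_1,\ldots,n_s)$ and $n_i=tn_i'$ for $i=1,\ldots,s$. If $(n_i',n_j',n_k')=1$ for some pairwise distinct $i,j,k$, then $$T\cong\mathbb{Z}_{((\varepsilon q)^t-1)/(\varepsilon q-1)}\times\mathbb{Z}_{[(\varepsilon q)^{n_i}-1,\,(\varepsilon q)^{(n_j,n_k)}-1]}\times\mathbb{Z}_{[(\varepsilon q)^{n_j}-1,\,(\varepsilon q)^{n_k}-1]}\times\prod_{l\ne i,j,k}\mathbb{Z}_{(\varepsilon q)^{n_l}-1}.$$
   Context: For a nonzero integer $m$, $\mathbb{Z}_m$ denotes a cyclic group of order $|m|$; gcd $(\cdot,\ldots,\cdot)$ and lcm $[\cdot,\ldots,\cdot]$ are taken positive. Convention: $\operatorname{SL}_n(-q)=\operatorname{SU}_n(q)$. The conjugacy classes of maximal tori of $\operatorname{SL}_n(\varepsilon q)$ are parameterized by unordered partitions of $n$; the torus parameterized by $n=n_1+\ldots+n_s$ is the intersection with $\operatorname{SL}_n(\varepsilon q)$ of a maximal torus of $\operatorname{GL}_n(\varepsilon q)$ (resp. $\operatorname{GU}_n(q)$) isomorphic to $\prod_i\mathbb{Z}_{(\varepsilon q)^{n_i}-1}$, corresponding to Weyl group elements of cycle type $(n_1,\ldots,n_s)$. *)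

theory Defs
  imports "HOL-Computational_Algebra.Primes" "HOL-Algebra.Elementary_Groups" "HOL-Algebra.Product_Groups"
begin

definition cyc :: "int \<Rightarrow> int monoid" where
  "cyc m = integer_mod_group (nat \<bar>m\<bar>)"

definition cyc_prod :: "int list \<Rightarrow> (nat \<Rightarrow> int) monoid" where
  "cyc_prod ms = product_group {..<length ms} (\<lambda>l. cyc (ms ! l))"

text \<open>Maximal torus of GL_n(eps q) (resp. GU_n(q)) parameterized by the partition ns:
  the product of cyclic groups of orders (eps q)^(n_i) - 1.\<close>
definition GL_torus :: "int \<Rightarrow> nat \<Rightarrow> nat list \<Rightarrow> (nat \<Rightarrow> int) monoid" where
  "GL_torus eps q ns = cyc_prod (map (\<lambda>ni. (eps * int q) ^ ni - 1) ns)"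

text \<open>The determinant on this torus: on each factor it is the (surjective) norm map
  Z_((eps q)^(n_i) - 1) -> Z_(eps q - 1) (in additive coordinates: reduction modulo
  |eps q - 1|, after choosing compatible generators), and the determinant is the
  product (here: sum) of these norms.\<close>
definition torus_det :: "int \<Rightarrow> nat \<Rightarrow> nat list \<Rightarrow> (nat \<Rightarrow> int) \<Rightarrow> int" where
  "torus_det eps q ns a = (\<Sum>l<length ns. a l) mod \<bar>eps * int q - 1\<bar>"

definition SL_torus :: "int \<Rightarrow> nat \<Rightarrow> nat list \<Rightarrow> (nat \<Rightarrow> int) monoid" where
  "SL_torus eps q ns = (GL_torus eps q ns)
     \<lparr>carrier := kernel (GL_torus eps q ns) (cyc (eps * int q - 1)) (torus_det eps q ns)\<rparr>"

end

theory Submission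
  imports Defs
begin


lemma pow_minus_one_dvd:
  fixes x :: int
  shows "x ^ n - 1 dvd x ^ (n * r) - 1"
proof -
  have "(x ^ n) ^ r - 1 = (x^n - 1) * (\<Sum>i<r. (x^n) ^ i)" by (rule power_diff_1_eq)
  then show ?thesis by (simp add: power_mult)
qed

lemma gcd_pow_minus_one:
  fixes x :: int
  shows "gcd (x ^ m - 1) (x ^ n - 1) = \<bar>x ^ gcd m n - 1\<bar>"
proof (induction m n rule: gcd_nat_induct)
  case (step m n)
  obtain w where w: "x ^ (n * (m div n)) - 1 = (x ^ n - 1) * w"
    using pow_minus_one_dvd[of x n "m div n"] by (auto elim: dvdE)
  have e: "x ^ m - 1 = (x ^ (m mod n) * w) * (x ^ n - 1) + (x ^ (m mod n) - 1)"
  proof -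
    have "m = m mod n + n * (m div n)" by simp
    then have "x ^ m = x ^ (m mod n) * x ^ (n * (m div n))" by (metis power_add)
    then have "x ^ m - 1 = x ^ (m mod n) * (x ^ (n * (m div n)) - 1) + (x ^ (m mod n) - 1)"
      by (simp add: algebra_simps)
    then show ?thesis using w by (simp add: algebra_simps)
  qed
  have "gcd (x ^ m - 1) (x ^ n - 1) = gcd (x ^ n - 1) (x ^ m - 1)" by (rule gcd.commute)
  also have "\<dots> = gcd (x ^ n - 1) (x ^ (m mod n) - 1)" unfolding e by (rule gcd_add_mult)
  also have "\<dots> = \<bar>x ^ gcd n (m mod n) - 1\<bar>" by (rule step.IH)
  also have "gcd n (m mod n) = gcd m n" by (metis gcd.commute gcd_red_nat)
  finally show ?case .
qed simp



lemma lin_form_add: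
  fixes lam M a b :: "nat \<Rightarrow> int" and e c :: int
  assumes "finite I" "e > 0" "\<forall>l\<in>I. e * c dvd lam l * M l"
    and "e dvd (\<Sum>l\<in>I. lam l * a l)" "e dvd (\<Sum>l\<in>I. lam l * b l)"
  shows "(\<Sum>l\<in>I. lam l * ((a l + b l) mod M l)) div e mod c
        = ((\<Sum>l\<in>I. lam l * a l) div e mod c + (\<Sum>l\<in>I. lam l * b l) div e mod c) mod c"
proof -
  obtain kf where kf: "\<forall>l\<in>I. lam l * M l = e * c * kf l"
    using assms(3) unfolding dvd_def by metis
  obtain sa where sa: "(\<Sum>l\<in>I. lam l * a l) = e * sa" using assms(4) by (auto simp: dvd_def)
  obtain sb where sb: "(\<Sum>l\<in>I. lam l * b l) = e * sb" using assms(5) by (auto simp: dvd_def)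
  define Q where "Q = (\<Sum>l\<in>I. kf l * ((a l + b l) div M l))"
  have "\<forall>l\<in>I. lam l * ((a l + b l) mod M l) = lam l * a l + lam l * b l - e * c * (kf l * ((a l + b l) div M l))"
  proof
    fix l assume l: "l \<in> I"
    have k: "lam l * M l = e * c * kf l" using kf l by blast
    have "lam l * ((a l + b l) mod M l) = lam l * (a l + b l) - (lam l * M l) * ((a l + b l) div M l)"
      by (simp add: minus_div_mult_eq_mod[symmetric] algebra_simps)
    also have "\<dots> = lam l * (a l + b l) - (e * c * kf l) * ((a l + b l) div M l)"
      by (simp only: k)
    finally show "lam l * ((a l + b l) mod M l) = lam l * a l + lam l * b l - e * c * (kf l * ((a l + b l) div M l))"
      by (simp add: algebra_simps)
  qed
  then have "(\<Sum>l\<in>I. lam l * ((a l + b l) mod M l)) = (\<Sum>l\<in>I. lam l * a l) + (\<Sum>l\<in>I. lam l * b l) - e * c * Q"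
    by (simp add: Q_def sum.distrib sum_subtractf sum_distrib_left)
  also have "\<dots> = e * (sa + sb - c * Q)" using sa sb by (simp add: algebra_simps)
  finally have "(\<Sum>l\<in>I. lam l * ((a l + b l) mod M l)) div e = sa + sb - c * Q"
    using assms(2) by simp
  moreover have "(\<Sum>l\<in>I. lam l * a l) div e = sa" "(\<Sum>l\<in>I. lam l * b l) div e = sb"
    using sa sb assms(2) by simp_all
  moreover have "(sa + sb - c * Q) mod c = (sa + sb) mod c"
  proof -
    have "sa + sb - c * Q = (sa + sb) + c * (- Q)" by simp
    then show ?thesis by (simp only: mod_mult_self2)
  qed
  ultimately show ?thesis by (simp add: mod_add_eq)
qed

lemma two_lemma:
  fixes A B y z al be :: int
  assumes "A > 0" "B > 0" "al * (B div gcd A B) + be * (A div gcd A B) = 1"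
    and "gcd A B dvd y + z" "lcm A B dvd al * (B div gcd A B) * y - be * (A div gcd A B) * z"
  shows "A dvd y \<and> B dvd z"
proof -
  define g where "g = gcd A B"
  define a' where "a' = A div g"
  define b' where "b' = B div g"
  have g0: "g > 0" using assms unfolding g_def by simp
  have A: "A = g * a'" unfolding a'_def g_def by (metis dvd_mult_div_cancel gcd_dvd1)
  have B: "B = g * b'" unfolding b'_def g_def by (metis dvd_mult_div_cancel gcd_dvd2)
  have L: "lcm A B = g * a' * b'"
  proof -
    have "\<bar>A\<bar> * \<bar>B\<bar> = gcd A B * lcm A B" by (rule prod_gcd_lcm_int)
    then have "A * B = g * lcm A B" using assms(1,2) unfolding g_def by simp
    moreover have "A * B = g * (g * a' * b')" using A B by (simp add: algebra_simps)
    ultimately have "g * lcm A B = g * (g * a' * b')" by metis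
    then show ?thesis using g0 by (metis mult_cancel_left order_less_irrefl)
  qed
  have bez: "al * b' + be * a' = 1" using assms(3) unfolding a'_def b'_def g_def .
  obtain r where r: "al * b' * y - be * a' * z = g * a' * b' * r"
    using assms(5) L unfolding a'_def b'_def g_def dvd_def by auto
  have "a' dvd al * b' * y"
  proof -
    have "al * b' * y = a' * (g * b' * r + be * z)" using r by (simp add: algebra_simps)
    then show ?thesis by simp
  qed
  moreover have "coprime a' (al * b')"
  proof (rule coprimeI)
    fix d assume "d dvd a'" "d dvd al * b'"
    then have "d dvd al * b' + be * a'" by simp
    then show "is_unit d" using bez by simp
  qed
  ultimately have "a' dvd y" using coprime_dvd_mult_right_iff by blast
  then obtain y1 where y1: "y = a' * y1" by (auto simp: dvd_def)
  have "b' dvd be * a' * z"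
  proof -
    have "be * a' * z = b' * (al * y - g * a' * r)" using r by (simp add: algebra_simps)
    then show ?thesis by simp
  qed
  moreover have "coprime b' (be * a')"
  proof (rule coprimeI)
    fix d assume "d dvd b'" "d dvd be * a'"
    then have "d dvd al * b' + be * a'" by simp
    then show "is_unit d" using bez by simp
  qed
  ultimately have "b' dvd z" using coprime_dvd_mult_right_iff by blast
  then obtain z1 where z1: "z = b' * z1" by (auto simp: dvd_def)
  have a'0: "a' \<noteq> 0" and b'0: "b' \<noteq> 0" using A B assms by auto
  have e1: "al * y1 - be * z1 = g * r"
  proof -
    have "a' * b' * (al * y1 - be * z1) = a' * b' * (g * r)" using r y1 z1 by (simp add: algebra_simps)
    then show ?thesis using a'0 b'0 by simp
  qed
  have e2: "g dvd a' * y1 + b' * z1" using assms(4) y1 z1 unfolding g_def by simp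
  have "y1 = (al * b' + be * a') * y1" using bez by simp
  also have "\<dots> = b' * (al * y1) + be * (a' * y1)" by (simp add: algebra_simps)
  also have "\<dots> = b' * (g * r) + be * (a' * y1 + b' * z1)" using e1 by (simp add: algebra_simps)
  finally have "g dvd y1" using e2 by (metis dvd_add dvd_mult dvd_triv_left)
  moreover have "z1 = (al * b' + be * a') * z1" using bez by simp
  then have "z1 = al * (b' * z1) + a' * (be * z1)" by (simp add: algebra_simps)
  then have "z1 = al * (a' * y1 + b' * z1) - a' * (g * r)" using e1 by (simp add: algebra_simps)
  then have "g dvd z1" using e2 by (metis dvd_diff dvd_mult dvd_triv_left)
  ultimately show ?thesis using A B y1 z1 by auto
qed



lemma lin_form_add1:
  fixes lam M a b :: "nat \<Rightarrow> int" and c :: int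
  assumes "finite I" "\<forall>l\<in>I. c dvd lam l * M l"
  shows "(\<Sum>l\<in>I. lam l * ((a l + b l) mod M l)) mod c
        = ((\<Sum>l\<in>I. lam l * a l) mod c + (\<Sum>l\<in>I. lam l * b l) mod c) mod c"
  using lin_form_add[of I 1 c lam M a b] assms by simp

lemma lin_sum_add:
  fixes M a b :: "nat \<Rightarrow> int" and e c :: int
  assumes "finite I" "e > 0" "\<forall>l\<in>I. e * c dvd M l"
    and "e dvd (\<Sum>l\<in>I. a l)" "e dvd (\<Sum>l\<in>I. b l)"
  shows "(\<Sum>l\<in>I. (a l + b l) mod M l) div e mod c
        = ((\<Sum>l\<in>I. a l) div e mod c + (\<Sum>l\<in>I. b l) div e mod c) mod c"
  using lin_form_add[of I e c "\<lambda>_. 1" M a b] assms by simp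

lemma cyc_carrier: "m \<noteq> 0 \<Longrightarrow> carrier (cyc m) = {0..<\<bar>m\<bar>}"
  by (simp add: cyc_def carrier_integer_mod_group)

lemma cyc_mult: "monoid.mult (cyc m) = (\<lambda>x y. (x + y) mod \<bar>m\<bar>)"
  by (simp add: cyc_def)

lemma cyc_prod_carrier:
  "\<forall>l<length ms. ms ! l \<noteq> 0 \<Longrightarrow> carrier (cyc_prod ms) = (\<Pi>\<^sub>E l\<in>{..<length ms}. {0..<\<bar>ms ! l\<bar>})"
  unfolding cyc_prod_def carrier_product_group by (intro PiE_cong) (simp add: cyc_carrier)

lemma cyc_prod_mult:
  "monoid.mult (cyc_prod ms) = (\<lambda>a b. \<lambda>l\<in>{..<length ms}. (a l + b l) mod \<bar>ms ! l\<bar>)"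
  unfolding cyc_prod_def mult_product_group by (simp add: cyc_mult)

lemma cyc_prod_group: "group (cyc_prod ms)"
  unfolding cyc_prod_def by (rule product_group) (simp add: cyc_def)

lemma cyc_prod_card:
  assumes "\<forall>l<length ms. ms ! l \<noteq> 0"
  shows "int (card (carrier (cyc_prod ms))) = (\<Prod>l<length ms. \<bar>ms ! l\<bar>)"
proof -
  have "card (carrier (cyc_prod ms)) = (\<Prod>l<length ms. card {0..<\<bar>ms ! l\<bar>})"
    using assms by (simp add: cyc_prod_carrier card_PiE)
  then show ?thesis by (simp add: of_nat_prod)
qed

lemma product_group_cong:
  assumes "\<And>i. i \<in> I \<Longrightarrow> G i = G' i"
  shows "product_group I G = product_group I G'"
proof -
  have c: "(\<Pi>\<^sub>E i\<in>I. carrier (G i)) = (\<Pi>\<^sub>E i\<in>I. carrier (G' i))"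
    by (rule PiE_cong) (simp add: assms)
  have m: "(\<lambda>x y. \<lambda>i\<in>I. x i \<otimes>\<^bsub>G i\<^esub> y i) = (\<lambda>x y. \<lambda>i\<in>I. x i \<otimes>\<^bsub>G' i\<^esub> y i)"
    by (intro ext) (simp add: restrict_def assms)
  have o: "(\<lambda>i\<in>I. \<one>\<^bsub>G i\<^esub>) = (\<lambda>i\<in>I. \<one>\<^bsub>G' i\<^esub>)"
    by (intro ext) (simp add: restrict_def assms)
  show ?thesis unfolding product_group_def c m o ..
qed

lemma cyc_prod_cong:
  assumes "length xs = length ys" "\<forall>l<length xs. \<bar>xs ! l\<bar> = \<bar>ys ! l\<bar>"
  shows "cyc_prod xs = cyc_prod ys"
proof -
  have "\<And>l. l \<in> {..<length xs} \<Longrightarrow> cyc (xs ! l) = cyc (ys ! l)"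
    using assms(2) by (simp add: cyc_def)
  then show ?thesis unfolding cyc_prod_def assms(1)[symmetric]
    by (rule product_group_cong)
qed

lemma kernel_card:
  fixes ms :: "int list" and D :: int and i :: nat
  assumes nz: "\<forall>l<length ms. ms ! l \<noteq> 0" and D0: "D > 0"
    and Dd: "\<forall>l<length ms. D dvd ms ! l" and i: "i < length ms"
  shows "int (card (kernel (cyc_prod ms) (integer_mod_group (nat D)) (\<lambda>a. (\<Sum>l<length ms. a l) mod D))) * D
         = (\<Prod>l<length ms. \<bar>ms ! l\<bar>)"
proof -
  let ?G = "cyc_prod ms" and ?H = "integer_mod_group (nat D)"
  let ?det = "\<lambda>a. (\<Sum>l<length ms. a l) mod D"
  let ?K = "kernel ?G ?H ?det"
  have gG: "group ?G" by (rule cyc_prod_group)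
  have cH: "carrier ?H = {0..<D}" using D0 by (simp add: carrier_integer_mod_group)
  have hom: "?det \<in> hom ?G ?H"
  proof (rule homI)
    fix a assume "a \<in> carrier ?G"
    show "?det a \<in> carrier ?H" using cH D0 by simp
  next
    fix a b assume a: "a \<in> carrier ?G" and b: "b \<in> carrier ?G"
    have "(\<Sum>l<length ms. (a \<otimes>\<^bsub>?G\<^esub> b) l) = (\<Sum>l<length ms. (a l + b l) mod \<bar>ms ! l\<bar>)"
      by (simp add: cyc_prod_mult)
    moreover have "(\<Sum>l<length ms. (a l + b l) mod \<bar>ms ! l\<bar>) div 1 mod D
        = ((\<Sum>l<length ms. a l) div 1 mod D + (\<Sum>l<length ms. b l) div 1 mod D) mod D"
      by (rule lin_sum_add) (use Dd in auto)
    ultimately show "?det (a \<otimes>\<^bsub>?G\<^esub> b) = ?det a \<otimes>\<^bsub>?H\<^esub> ?det b"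
      using D0 by simp
  qed
  have gh: "group_hom ?G ?H ?det"
    using gG hom by (simp add: group_hom_def group_hom_axioms_def)
  have surj: "?det ` carrier ?G = carrier ?H"
  proof
    show "?det ` carrier ?G \<subseteq> carrier ?H" using hom by (auto simp: hom_def)
  next
    show "carrier ?H \<subseteq> ?det ` carrier ?G"
    proof
      fix r assume r: "r \<in> carrier ?H"
      define a where "a = (\<lambda>l\<in>{..<length ms}. if l = i then r else 0)"
      have "D \<le> \<bar>ms ! i\<bar>" using dvd_imp_le_int[of "ms ! i" D] nz Dd i D0 by auto
      then have "a \<in> carrier ?G" using r cH nz i by (auto simp: cyc_prod_carrier a_def)
      moreover have "?det a = r"
      proof -
        have "(\<Sum>l<length ms. a l) = (\<Sum>l<length ms. if l = i then r else 0)"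
          by (simp add: a_def)
        also have "\<dots> = r" using i by simp
        finally show ?thesis using r cH by simp
      qed
      ultimately show "r \<in> ?det ` carrier ?G" by force
    qed
  qed
  have "(?G Mod ?K) \<cong> ?H" by (rule group_hom.FactGroup_iso[OF gh surj])
  then have c1: "card (rcosets\<^bsub>?G\<^esub> ?K) = nat D"
    using iso_same_card cH D0 by (fastforce simp: FactGroup_def)
  have "card (rcosets\<^bsub>?G\<^esub> ?K) * card ?K = order ?G"
    by (rule group.lagrange[OF gG group_hom.subgroup_kernel[OF gh]])
  then have "nat D * card ?K = card (carrier ?G)" using c1 D0
    by (simp add: order_def)
  then have "int (nat D * card ?K) = int (card (carrier ?G))" by simp
  then have "int (card ?K) * D = int (card (carrier ?G))" using D0
    by (simp only: of_nat_mult int_nat_eq) (simp add: mult.commute)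
  then show ?thesis using cyc_prod_card[OF nz] by simp
qed



lemma lcm_eq_pos:
  fixes a b :: int
  assumes "a > 0" "b > 0"
  shows "lcm a b = a * (b div gcd a b)" "lcm a b = (a div gcd a b) * b"
proof -
  have g0: "gcd a b > 0" using assms by simp
  have p: "a * b = gcd a b * lcm a b" using prod_gcd_lcm_int[of a b] assms by simp
  have "a * b = gcd a b * (a * (b div gcd a b))"
    by (metis dvd_mult_div_cancel gcd_dvd2 mult.left_commute)
  then show "lcm a b = a * (b div gcd a b)" using p g0 by (metis mult_cancel_left order_less_irrefl)
  have "a * b = gcd a b * ((a div gcd a b) * b)"
    by (metis dvd_mult_div_cancel gcd_dvd1 mult.assoc)
  then show "lcm a b = (a div gcd a b) * b" using p g0 by (metis mult_cancel_left order_less_irrefl)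
qed

lemma bezout_div_gcd:
  fixes a b :: int
  assumes "a > 0" "b > 0"
  shows "\<exists>u v. u * (b div gcd a b) + v * (a div gcd a b) = 1"
proof -
  have "coprime (a div gcd a b) (b div gcd a b)" using assms by (intro div_gcd_coprime) simp
  then have "gcd (b div gcd a b) (a div gcd a b) = 1" by (simp add: coprime_iff_gcd_eq_1 gcd.commute)
  then show ?thesis using bezout_int[of "b div gcd a b" "a div gcd a b"] by simp
qed

lemma eq_of_dvd_diff:
  fixes a b m :: int
  assumes "0 \<le> a" "a < m" "0 \<le> b" "b < m" "m dvd a - b"
  shows "a = b"
proof -
  have "a mod m = b mod m" using assms(5) by (simp add: mod_eq_dvd_iff)
  then show ?thesis using assms by simp
qed



lemma main_abs:
  fixes ms :: "int list" and D :: int and i j k :: nat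
  assumes nz: "\<forall>l<length ms. ms ! l \<noteq> 0" and D0: "D > 0"
    and Dd: "\<forall>l<length ms. D dvd ms ! l"
    and ijk: "i < length ms" "j < length ms" "k < length ms" "i \<noteq> j" "i \<noteq> k" "j \<noteq> k"
    and GD: "D dvd gcd \<bar>ms ! i\<bar> (gcd \<bar>ms ! j\<bar> \<bar>ms ! k\<bar>)"
    and Gd: "\<forall>l<length ms. gcd \<bar>ms ! i\<bar> (gcd \<bar>ms ! j\<bar> \<bar>ms ! k\<bar>) dvd ms ! l"
  shows "(cyc_prod ms)\<lparr>carrier := kernel (cyc_prod ms) (integer_mod_group (nat D))
            (\<lambda>a. (\<Sum>l<length ms. a l) mod D)\<rparr>
     \<cong> cyc_prod ([gcd \<bar>ms ! i\<bar> (gcd \<bar>ms ! j\<bar> \<bar>ms ! k\<bar>) div D,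
                   lcm \<bar>ms ! i\<bar> (gcd \<bar>ms ! j\<bar> \<bar>ms ! k\<bar>),
                   lcm \<bar>ms ! j\<bar> \<bar>ms ! k\<bar>]
                  @ map (\<lambda>l. ms ! l) (filter (\<lambda>l. l \<notin> {i, j, k}) [0..<length ms]))"
proof -
  define s where "s = length ms"
  define M where "M = (\<lambda>l. \<bar>ms ! l\<bar>)"
  define g2 where "g2 = gcd (M j) (M k)"
  define G1 where "G1 = gcd (M i) g2"
  define L1 where "L1 = lcm (M i) g2"
  define L2 where "L2 = lcm (M j) (M k)"
  define c0 where "c0 = G1 div D"
  define os where "os = filter (\<lambda>l. l \<notin> {i, j, k}) [0..<s]"
  define T where "T = c0 # L1 # L2 # map (\<lambda>l. ms ! l) os"
  let ?G = "cyc_prod ms"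
  let ?K = "kernel (cyc_prod ms) (integer_mod_group (nat D)) (\<lambda>a. (\<Sum>l<length ms. a l) mod D)"
  let ?S = "(cyc_prod ms)\<lparr>carrier := ?K\<rparr>"
  let ?H = "cyc_prod T"
  have goalT: "[gcd \<bar>ms ! i\<bar> (gcd \<bar>ms ! j\<bar> \<bar>ms ! k\<bar>) div D,
                   lcm \<bar>ms ! i\<bar> (gcd \<bar>ms ! j\<bar> \<bar>ms ! k\<bar>),
                   lcm \<bar>ms ! j\<bar> \<bar>ms ! k\<bar>]
                  @ map (\<lambda>l. ms ! l) (filter (\<lambda>l. l \<notin> {i, j, k}) [0..<length ms]) = T"
    by (simp add: T_def c0_def G1_def g2_def M_def L1_def L2_def os_def s_def)
  have Mpos: "\<And>l. l < s \<Longrightarrow> M l > 0" using nz by (simp add: M_def s_def)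
  have i: "i < s" and j: "j < s" and k: "k < s" using ijk by (simp_all add: s_def)
  have g2pos: "g2 > 0" using Mpos[OF j] Mpos[OF k] by (simp add: g2_def)
  have G1pos: "G1 > 0" using Mpos[OF i] by (simp add: G1_def)
  have L1pos: "L1 > 0" using Mpos[OF i] g2pos by (simp add: L1_def lcm_pos_int)
  have L2pos: "L2 > 0" using Mpos[OF j] Mpos[OF k] by (simp add: L2_def lcm_pos_int)
  have DG1: "D dvd G1" using GD by (simp add: G1_def g2_def M_def)
  have Dc0: "D * c0 = G1" using DG1 by (simp add: c0_def)
  have c0pos: "c0 > 0" using Dc0 G1pos D0 by (metis pos_imp_zdiv_pos_iff zero_less_mult_pos c0_def
        zdiv_mono1 order_less_le)
  have G1M: "\<And>l. l < s \<Longrightarrow> G1 dvd M l" using Gd by (simp add: G1_def g2_def M_def s_def)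
  have G1g2: "G1 dvd g2" by (simp add: G1_def)
  have g2j: "g2 dvd M j" and g2k: "g2 dvd M k" by (simp_all add: g2_def)
  obtain al1 be1 where bz1: "al1 * (g2 div gcd (M i) g2) + be1 * (M i div gcd (M i) g2) = 1"
    using bezout_div_gcd[of "M i" g2] Mpos[OF i] g2pos by auto
  obtain al2 be2 where bz2: "al2 * (M k div gcd (M j) (M k)) + be2 * (M j div gcd (M j) (M k)) = 1"
    using bezout_div_gcd[of "M j" "M k"] Mpos[OF j] Mpos[OF k] by auto
  have L1a: "L1 = M i * (g2 div G1)" and L1b: "L1 = (M i div G1) * g2"
    using lcm_eq_pos[of "M i" g2] Mpos[OF i] g2pos by (simp_all add: L1_def G1_def)
  have L2a: "L2 = M j * (M k div g2)" and L2b: "L2 = (M j div g2) * M k"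
    using lcm_eq_pos[of "M j" "M k"] Mpos[OF j] Mpos[OF k] by (simp_all add: L2_def g2_def)
  define lam1 where "lam1 = (\<lambda>l. if l = i then al1 * (g2 div G1) else - (be1 * (M i div G1)))"
  define lam2 where "lam2 = (\<lambda>l. if l = j then al2 * (M k div g2) else - (be2 * (M j div g2)))"
  have dv1: "\<forall>l\<in>{i, j, k}. L1 dvd lam1 l * M l"
  proof -
    have "L1 dvd al1 * (g2 div G1) * M i" using L1a by (simp add: mult.commute)
    moreover have "L1 dvd - (be1 * (M i div G1)) * M j"
      using L1b g2j by (metis dvd_mult dvd_minus_iff mult.commute mult_dvd_mono dvd_refl mult.assoc)
    moreover have "L1 dvd - (be1 * (M i div G1)) * M k"
      using L1b g2k by (metis dvd_mult dvd_minus_iff mult.commute mult_dvd_mono dvd_refl mult.assoc)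
    ultimately show ?thesis using ijk by (simp add: lam1_def)
  qed
  have dv2: "\<forall>l\<in>{j, k}. L2 dvd lam2 l * M l"
  proof -
    have "L2 dvd al2 * (M k div g2) * M j" using L2a by (simp add: mult.commute)
    moreover have "L2 dvd - (be2 * (M j div g2)) * M k"
      using L2b by (simp add: mult.commute)
    ultimately show ?thesis using ijk by (simp add: lam2_def)
  qed
  have lenT: "length T = Suc (Suc (Suc (length os)))" by (simp add: T_def)
  have setos: "set os = {..<s} - {i, j, k}" by (auto simp: os_def)
  have osl: "\<And>r. r < length os \<Longrightarrow> os ! r < s \<and> os ! r \<notin> {i, j, k}"
    using setos nth_mem by blast
  have distos: "distinct os" by (simp add: os_def)
  have Tnz: "\<forall>r<length T. T ! r \<noteq> 0"
  proof (intro allI impI)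
    fix r assume r: "r < length T"
    show "T ! r \<noteq> 0"
    proof (cases "r < 3")
      case True then have "r = 0 \<or> r = 1 \<or> r = 2" by auto
      then show ?thesis using c0pos L1pos L2pos by (auto simp: T_def)
    next
      case False
      define r' where "r' = r - 3"
      have r': "r = Suc (Suc (Suc r'))" using False by (simp add: r'_def)
      then have "r' < length os" using r lenT by simp
      then show ?thesis using r' nz osl by (simp add: T_def s_def)
    qed
  qed
  have cG: "carrier ?G = (\<Pi>\<^sub>E l\<in>{..<s}. {0..<M l})"
    using cyc_prod_carrier[OF nz] by (simp add: M_def s_def)
  have cH: "carrier ?H = (\<Pi>\<^sub>E r\<in>{..<length T}. {0..<\<bar>T ! r\<bar>})"
    using cyc_prod_carrier[OF Tnz] .
  have mG: "\<And>a b. a \<otimes>\<^bsub>?G\<^esub> b = (\<lambda>l\<in>{..<s}. (a l + b l) mod M l)"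
    by (simp add: cyc_prod_mult M_def s_def)
  have mH: "\<And>a b. a \<otimes>\<^bsub>?H\<^esub> b = (\<lambda>r\<in>{..<length T}. (a r + b r) mod \<bar>T ! r\<bar>)"
    by (simp add: cyc_prod_mult)
  have Kmem: "\<And>a. a \<in> ?K \<longleftrightarrow> a \<in> carrier ?G \<and> D dvd (\<Sum>l<s. a l)"
    by (simp add: kernel_def s_def mod_eq_0_iff_dvd)
  define F where "F = (\<lambda>a. \<lambda>r\<in>{..<length T}.
     if r = 0 then ((\<Sum>l<s. a l) div D) mod c0
     else if r = 1 then (\<Sum>l\<in>{i, j, k}. lam1 l * a l) mod L1
     else if r = 2 then (\<Sum>l\<in>{j, k}. lam2 l * a l) mod L2
     else a (os ! (r - 3)))"
  have F0: "\<And>a. F a 0 = ((\<Sum>l<s. a l) div D) mod c0" by (simp add: F_def lenT)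
  have F1: "\<And>a. F a 1 = (\<Sum>l\<in>{i, j, k}. lam1 l * a l) mod L1" by (simp add: F_def lenT)
  have F2: "\<And>a. F a 2 = (\<Sum>l\<in>{j, k}. lam2 l * a l) mod L2" by (simp add: F_def lenT)
  have F1s: "\<And>a. F a (Suc 0) = (\<Sum>l\<in>{i, j, k}. lam1 l * a l) mod L1" using F1 by simp
  have F2s: "\<And>a. F a (Suc (Suc 0)) = (\<Sum>l\<in>{j, k}. lam2 l * a l) mod L2"
    using F2 by (simp add: numeral_2_eq_2)
  have F3: "\<And>a r'. r' < length os \<Longrightarrow> F a (Suc (Suc (Suc r'))) = a (os ! r')"
    by (simp add: F_def lenT)
  have Fout: "\<And>a r. \<not> r < length T \<Longrightarrow> F a r = undefined" by (simp add: F_def)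
  have mH0: "\<And>x y. (x \<otimes>\<^bsub>?H\<^esub> y) 0 = (x 0 + y 0) mod c0"
    using c0pos by (simp only: mH) (simp add: lenT T_def)
  have mH1: "\<And>x y. (x \<otimes>\<^bsub>?H\<^esub> y) 1 = (x 1 + y 1) mod L1"
    using L1pos by (simp only: mH) (simp add: lenT T_def)
  have mH2: "\<And>x y. (x \<otimes>\<^bsub>?H\<^esub> y) 2 = (x 2 + y 2) mod L2"
    using L2pos by (simp only: mH) (simp add: lenT T_def)
  have mH3: "\<And>x y r'. r' < length os \<Longrightarrow> (x \<otimes>\<^bsub>?H\<^esub> y) (Suc (Suc (Suc r')))
      = (x (Suc (Suc (Suc r'))) + y (Suc (Suc (Suc r')))) mod M (os ! r')"
    by (simp only: mH) (simp add: lenT T_def M_def)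
  have rng: "\<And>x l. x \<in> carrier ?G \<Longrightarrow> l < s \<Longrightarrow> 0 \<le> x l \<and> x l < M l"
    using cG by (auto simp: PiE_iff)
  have Fc: "\<And>a. a \<in> ?K \<Longrightarrow> F a \<in> carrier ?H"
  proof -
    fix a assume a: "a \<in> ?K"
    then have ac: "a \<in> carrier ?G" by (simp add: Kmem)
    show "F a \<in> carrier ?H" unfolding cH
    proof (rule PiE_I)
      fix r assume r: "r \<in> {..<length T}"
      show "F a r \<in> {0..<\<bar>T ! r\<bar>}"
      proof (cases "r < 3")
        case True then have "r = 0 \<or> r = 1 \<or> r = 2" by auto
        then show ?thesis using r c0pos L1pos L2pos by (auto simp: F0 F1 F2 F1s F2s T_def)
      next
        case False
        define r' where "r' = r - 3"
        have r': "r = Suc (Suc (Suc r'))" using False by (simp add: r'_def)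
        have r'l: "r' < length os" using r r' lenT by simp
        have "0 \<le> a (os ! r') \<and> a (os ! r') < M (os ! r')" using rng[OF ac] osl[OF r'l] by blast
        then show ?thesis using r' r'l by (simp add: F3 T_def M_def)
      qed
    next
      fix r assume "r \<notin> {..<length T}" then show "F a r = undefined" by (simp add: Fout)
    qed
  qed
  have Fm: "\<And>a b. a \<in> ?K \<Longrightarrow> b \<in> ?K \<Longrightarrow> F (a \<otimes>\<^bsub>?G\<^esub> b) = F a \<otimes>\<^bsub>?H\<^esub> F b"
  proof -
    fix a b assume a: "a \<in> ?K" and b: "b \<in> ?K"
    have Da: "D dvd (\<Sum>l<s. a l)" and Db: "D dvd (\<Sum>l<s. b l)" using Kmem a b by auto
    have ab: "\<And>l. l < s \<Longrightarrow> (a \<otimes>\<^bsub>?G\<^esub> b) l = (a l + b l) mod M l" by (simp add: mG)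
    show "F (a \<otimes>\<^bsub>?G\<^esub> b) = F a \<otimes>\<^bsub>?H\<^esub> F b"
    proof (rule ext)
      fix r
      show "F (a \<otimes>\<^bsub>?G\<^esub> b) r = (F a \<otimes>\<^bsub>?H\<^esub> F b) r"
      proof (cases "r < length T")
        case False then show ?thesis by (simp add: Fout mH)
      next
        case True
        consider "r = 0" | "r = 1" | "r = 2" | "r \<ge> 3" by linarith
        then show ?thesis
        proof cases
          case 1
          have e: "(\<Sum>l<s. (a \<otimes>\<^bsub>?G\<^esub> b) l) = (\<Sum>l<s. (a l + b l) mod M l)"
            by (rule sum.cong) (simp_all add: ab)
          have "(\<Sum>l<s. (a l + b l) mod M l) div D mod c0
              = ((\<Sum>l<s. a l) div D mod c0 + (\<Sum>l<s. b l) div D mod c0) mod c0"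
            by (rule lin_sum_add) (use D0 Dc0 G1M Da Db in auto)
          then show ?thesis using 1 by (simp only: F0 mH0 e)
        next
          case 2
          have e: "(\<Sum>l\<in>{i, j, k}. lam1 l * (a \<otimes>\<^bsub>?G\<^esub> b) l) = (\<Sum>l\<in>{i, j, k}. lam1 l * ((a l + b l) mod M l))"
            by (rule sum.cong) (use i j k ab in auto)
          have "(\<Sum>l\<in>{i, j, k}. lam1 l * ((a l + b l) mod M l)) mod L1
              = ((\<Sum>l\<in>{i, j, k}. lam1 l * a l) mod L1 + (\<Sum>l\<in>{i, j, k}. lam1 l * b l) mod L1) mod L1"
            by (rule lin_form_add1) (use dv1 in auto)
          then show ?thesis using 2 by (simp only: F1 mH1 e)
        next
          case 3
          have e: "(\<Sum>l\<in>{j, k}. lam2 l * (a \<otimes>\<^bsub>?G\<^esub> b) l) = (\<Sum>l\<in>{j, k}. lam2 l * ((a l + b l) mod M l))"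
            by (rule sum.cong) (use j k ab in auto)
          have "(\<Sum>l\<in>{j, k}. lam2 l * ((a l + b l) mod M l)) mod L2
              = ((\<Sum>l\<in>{j, k}. lam2 l * a l) mod L2 + (\<Sum>l\<in>{j, k}. lam2 l * b l) mod L2) mod L2"
            by (rule lin_form_add1) (use dv2 in auto)
          then show ?thesis using 3 by (simp only: F2 mH2 e)
        next
          case 4
          define r' where "r' = r - 3"
          have r': "r = Suc (Suc (Suc r'))" using 4 by (simp add: r'_def)
          have r'l: "r' < length os" using True r' lenT by simp
          have "(a \<otimes>\<^bsub>?G\<^esub> b) (os ! r') = (a (os ! r') + b (os ! r')) mod M (os ! r')"
            using ab osl[OF r'l] by blast
          then show ?thesis using r'l by (simp only: r' F3 mH3)
        qed
      qed
    qed
  qed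
  have Finj: "inj_on F ?K"
  proof (rule inj_onI)
    fix a b assume a: "a \<in> ?K" and b: "b \<in> ?K" and eq: "F a = F b"
    have ac: "a \<in> carrier ?G" and bc: "b \<in> carrier ?G" using a b by (simp_all add: Kmem)
    have Da: "D dvd (\<Sum>l<s. a l)" and Db: "D dvd (\<Sum>l<s. b l)" using Kmem a b by auto
    have oth: "\<And>l. l \<in> {..<s} - {i, j, k} \<Longrightarrow> a l = b l"
    proof -
      fix l assume "l \<in> {..<s} - {i, j, k}"
      then have "l \<in> set os" using setos by simp
      then obtain r' where r': "r' < length os" "l = os ! r'" by (auto simp: in_set_conv_nth)
      then show "a l = b l" using F3[of r' a] F3[of r' b] eq by simp
    qed
    define y where "y = (\<lambda>l. a l - b l)"
    have sum0: "(\<Sum>l<s. a l) - (\<Sum>l<s. b l) = y i + (y j + y k)"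
    proof -
      have "(\<Sum>l<s. a l) - (\<Sum>l<s. b l) = (\<Sum>l<s. y l)" by (simp add: y_def sum_subtractf)
      also have "\<dots> = (\<Sum>l\<in>{..<s} - {i, j, k}. y l) + (\<Sum>l\<in>{i, j, k}. y l)"
        by (rule sum.subset_diff) (use i j k in auto)
      also have "(\<Sum>l\<in>{..<s} - {i, j, k}. y l) = 0" using oth by (simp add: y_def)
      also have "(\<Sum>l\<in>{i, j, k}. y l) = y i + (y j + y k)" using ijk by simp
      finally show ?thesis by simp
    qed
    have G1y: "G1 dvd y i + (y j + y k)"
    proof -
      obtain sa where sa: "(\<Sum>l<s. a l) = D * sa" using Da by (auto elim: dvdE)
      obtain sb where sb: "(\<Sum>l<s. b l) = D * sb" using Db by (auto elim: dvdE)
      have "sa mod c0 = sb mod c0" using F0[of a] F0[of b] eq sa sb D0 by simp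
      then have "c0 dvd sa - sb" by (simp add: mod_eq_dvd_iff)
      then have "D * c0 dvd D * (sa - sb)" by (rule mult_dvd_mono[OF dvd_refl])
      then show ?thesis using Dc0 sa sb sum0 by (simp add: right_diff_distrib)
    qed
    have L1y: "L1 dvd al1 * (g2 div G1) * y i - be1 * (M i div G1) * (y j + y k)"
    proof -
      have "(\<Sum>l\<in>{i, j, k}. lam1 l * a l) mod L1 = (\<Sum>l\<in>{i, j, k}. lam1 l * b l) mod L1"
        using F1[of a] F1[of b] eq by simp
      then have "L1 dvd (\<Sum>l\<in>{i, j, k}. lam1 l * a l) - (\<Sum>l\<in>{i, j, k}. lam1 l * b l)"
        by (simp add: mod_eq_dvd_iff)
      moreover have "(\<Sum>l\<in>{i, j, k}. lam1 l * a l) - (\<Sum>l\<in>{i, j, k}. lam1 l * b l)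
          = al1 * (g2 div G1) * y i - be1 * (M i div G1) * (y j + y k)"
        using ijk by (simp add: lam1_def y_def algebra_simps)
      ultimately show ?thesis by simp
    qed
    have L2y: "L2 dvd al2 * (M k div g2) * y j - be2 * (M j div g2) * y k"
    proof -
      have "(\<Sum>l\<in>{j, k}. lam2 l * a l) mod L2 = (\<Sum>l\<in>{j, k}. lam2 l * b l) mod L2"
        using F2[of a] F2[of b] eq by simp
      then have "L2 dvd (\<Sum>l\<in>{j, k}. lam2 l * a l) - (\<Sum>l\<in>{j, k}. lam2 l * b l)"
        by (simp add: mod_eq_dvd_iff)
      moreover have "(\<Sum>l\<in>{j, k}. lam2 l * a l) - (\<Sum>l\<in>{j, k}. lam2 l * b l)
          = al2 * (M k div g2) * y j - be2 * (M j div g2) * y k"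
        using ijk by (simp add: lam2_def y_def algebra_simps)
      ultimately show ?thesis by simp
    qed
    have r1: "M i dvd y i \<and> g2 dvd y j + y k"
      by (rule two_lemma[of "M i" g2 al1 be1]) (use Mpos[OF i] g2pos bz1 G1y L1y in \<open>simp_all add: G1_def L1_def\<close>)
    have r2: "M j dvd y j \<and> M k dvd y k"
      by (rule two_lemma[of "M j" "M k" al2 be2]) (use Mpos[OF j] Mpos[OF k] bz2 r1 L2y in \<open>simp_all add: g2_def L2_def\<close>)
    have eqi: "a i = b i" using eq_of_dvd_diff[of "a i" "M i" "b i"] rng[OF ac i] rng[OF bc i] r1 by (simp add: y_def)
    have eqj: "a j = b j" using eq_of_dvd_diff[of "a j" "M j" "b j"] rng[OF ac j] rng[OF bc j] r2 by (simp add: y_def)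
    have eqk: "a k = b k" using eq_of_dvd_diff[of "a k" "M k" "b k"] rng[OF ac k] rng[OF bc k] r2 by (simp add: y_def)
    have all: "\<And>l. l \<in> {..<s} \<Longrightarrow> a l = b l"
    proof -
      fix l assume l: "l \<in> {..<s}"
      show "a l = b l"
      proof (cases "l \<in> {i, j, k}")
        case True then show ?thesis using eqi eqj eqk by auto
      next
        case False then show ?thesis using oth l by auto
      qed
    qed
    show "a = b" by (rule PiE_ext[OF ac[unfolded cG] bc[unfolded cG] all])
  qed
  have cardK: "int (card ?K) * D = (\<Prod>l<s. M l)"
    using kernel_card[OF nz D0 Dd ijk(1)] by (simp add: M_def s_def)
  have cardH: "int (card (carrier ?H)) = (\<Prod>r<length T. \<bar>T ! r\<bar>)"
    using cyc_prod_card[OF Tnz] .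
  have PT: "(\<Prod>r<length T. \<bar>T ! r\<bar>) = c0 * (L1 * (L2 * (\<Prod>r<length os. M (os ! r))))"
    using c0pos L1pos L2pos by (simp only: lenT prod.lessThan_Suc_shift) (simp add: T_def M_def)
  have bij: "bij_betw ((!) os) {..<length os} (set os)"
    unfolding bij_betw_def using distos by (auto simp: inj_on_nth in_set_conv_nth)
  have Pos: "(\<Prod>r<length os. M (os ! r)) = (\<Prod>l\<in>set os. M l)"
    by (rule prod.reindex_bij_betw[OF bij])
  have PG: "(\<Prod>l<s. M l) = (\<Prod>l\<in>{..<s} - {i, j, k}. M l) * (\<Prod>l\<in>{i, j, k}. M l)"
    by (rule prod.subset_diff) (use i j k in auto)
  have P3: "(\<Prod>l\<in>{i, j, k}. M l) = M i * M j * M k" using ijk by simp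
  have num: "D * c0 * L1 * L2 = M i * M j * M k"
  proof -
    have "\<bar>M i\<bar> * \<bar>g2\<bar> = G1 * L1" using prod_gcd_lcm_int[of "M i" g2] by (simp add: G1_def L1_def)
    then have e1: "M i * g2 = G1 * L1" using Mpos[OF i] g2pos by simp
    have "\<bar>M j\<bar> * \<bar>M k\<bar> = g2 * L2" using prod_gcd_lcm_int[of "M j" "M k"] by (simp add: g2_def L2_def)
    then have e2: "M j * M k = g2 * L2" using Mpos[OF j] Mpos[OF k] by simp
    have "D * c0 * L1 * L2 = M i * g2 * L2" using Dc0 e1 by simp
    also have "\<dots> = M i * M j * M k" using e2 by (simp add: mult.assoc)
    finally show ?thesis .
  qed
  have "int (card ?K) * D = int (card (carrier ?H)) * D"
  proof -
    have "int (card ?K) * D = (\<Prod>l\<in>set os. M l) * (M i * M j * M k)" using cardK PG P3 setos by simp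
    also have "\<dots> = (\<Prod>l\<in>set os. M l) * (D * c0 * L1 * L2)" using num by simp
    also have "\<dots> = int (card (carrier ?H)) * D" using cardH PT Pos by (simp add: algebra_simps)
    finally show ?thesis .
  qed
  then have cardeq: "card ?K = card (carrier ?H)" using D0 by simp
  have finH: "finite (carrier ?H)" unfolding cH by (intro finite_PiE) auto
  have img: "F ` ?K = carrier ?H"
  proof (rule card_subset_eq[OF finH])
    show "F ` ?K \<subseteq> carrier ?H" using Fc by blast
    show "card (F ` ?K) = card (carrier ?H)" using card_image[OF Finj] cardeq by simp
  qed
  have "F \<in> iso ?S ?H"
    unfolding iso_def
  proof (intro CollectI conjI)
    show "F \<in> hom ?S ?H" by (rule homI) (simp_all add: Fc Fm)
    show "bij_betw F (carrier ?S) (carrier ?H)" using Finj img by (simp add: bij_betw_def)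
  qed
  then show ?thesis unfolding goalT is_iso_def by auto
qed



theorem corollary2:
  fixes q n :: nat and eps :: int and ns :: "nat list" and i j k :: nat
  assumes "\<exists>p e. prime p \<and> e > 0 \<and> q = p ^ e"
    and "eps = 1 \<or> eps = -1"
    and "\<forall>x\<in>set ns. x > 0" and "sum_list ns = n"
    and "i < length ns" "j < length ns" "k < length ns"
    and "i \<noteq> j" "i \<noteq> k" "j \<noteq> k"
    and "gcd (gcd (ns ! i div Gcd (set ns)) (ns ! j div Gcd (set ns))) (ns ! k div Gcd (set ns)) = 1"
  shows "SL_torus eps q ns \<cong>
    cyc_prod ([((eps * int q) ^ Gcd (set ns) - 1) div (eps * int q - 1),
               lcm ((eps * int q) ^ (ns ! i) - 1) ((eps * int q) ^ gcd (ns ! j) (ns ! k) - 1),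
               lcm ((eps * int q) ^ (ns ! j) - 1) ((eps * int q) ^ (ns ! k) - 1)]
              @ map (\<lambda>l. (eps * int q) ^ (ns ! l) - 1)
                    (filter (\<lambda>l. l \<notin> {i, j, k}) [0..<length ns]))"
proof -
  obtain p e where pe: "prime p" "e > 0" "q = p ^ e" using assms(1) by blast
  have p2: "p \<ge> 2" using pe(1) by (rule prime_ge_2_nat)
  have "p ^ 1 \<le> p ^ e" using pe(2) p2 by (intro power_increasing) auto
  then have q2: "q \<ge> 2" using p2 pe(3) by simp
  define x where "x = eps * int q"
  have ax: "\<bar>x\<bar> \<ge> 2" using assms(2) q2 by (auto simp: x_def)
  have Anz: "\<And>m. m > 0 \<Longrightarrow> x ^ m - 1 \<noteq> 0"
  proof
    fix m :: nat assume m: "m > 0" and h: "x ^ m - 1 = 0"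
    have "\<bar>x\<bar> ^ 1 \<le> \<bar>x\<bar> ^ m" using m ax by (intro power_increasing) auto
    then have "\<bar>x ^ m\<bar> \<ge> 2" using ax by (simp add: power_abs)
    then show False using h by simp
  qed
  define t where "t = Gcd (set ns)"
  have tdvd: "\<And>l. l < length ns \<Longrightarrow> t dvd ns ! l" unfolding t_def by (simp add: Gcd_dvd)
  have gt: "gcd (ns ! i) (gcd (ns ! j) (ns ! k)) = t"
  proof -
    have ei: "ns ! i = t * (ns ! i div t)" using tdvd[OF assms(5)] by simp
    have ej: "ns ! j = t * (ns ! j div t)" using tdvd[OF assms(6)] by simp
    have ek: "ns ! k = t * (ns ! k div t)" using tdvd[OF assms(7)] by simp
    have "gcd (ns ! i) (gcd (ns ! j) (ns ! k))
        = t * gcd (ns ! i div t) (gcd (ns ! j div t) (ns ! k div t))"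
      by (subst ei, subst ej, subst ek) (simp add: gcd_mult_distrib_nat)
    also have "gcd (ns ! i div t) (gcd (ns ! j div t) (ns ! k div t)) = 1"
      using assms(11) by (simp add: t_def gcd.assoc)
    finally show ?thesis by simp
  qed
  have NG: "\<And>a b. gcd (x ^ a - 1) (x ^ b - 1) = \<bar>x ^ gcd a b - 1\<bar>" by (rule gcd_pow_minus_one)
  have Ddvd: "\<And>m. x - 1 dvd x ^ m - 1"
  proof -
    fix m
    have "gcd (x ^ 1 - 1) (x ^ m - 1) = \<bar>x - 1\<bar>" using NG[of 1 m] by simp
    then show "x - 1 dvd x ^ m - 1" by (metis gcd_dvd2 abs_dvd_iff power_one_right)
  qed
  have tl: "\<And>l. l < length ns \<Longrightarrow> x ^ t - 1 dvd x ^ (ns ! l) - 1"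
  proof -
    fix l assume l: "l < length ns"
    have "gcd (x ^ t - 1) (x ^ (ns ! l) - 1) = \<bar>x ^ t - 1\<bar>" using NG[of t "ns ! l"] tdvd[OF l] by simp
    then show "x ^ t - 1 dvd x ^ (ns ! l) - 1" by (metis gcd_dvd2 abs_dvd_iff)
  qed
  define ms where "ms = map (\<lambda>ni. x ^ ni - 1) ns"
  have lms: "length ms = length ns" by (simp add: ms_def)
  have msl: "\<And>l. l < length ns \<Longrightarrow> ms ! l = x ^ (ns ! l) - 1" by (simp add: ms_def)
  have npos: "\<And>l. l < length ns \<Longrightarrow> ns ! l > 0" using assms(3) nth_mem by blast
  have nz: "\<forall>l<length ms. ms ! l \<noteq> 0" using Anz npos by (simp add: lms msl)
  have D0: "\<bar>x - 1\<bar> > 0" using ax by auto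
  have Dd: "\<forall>l<length ms. \<bar>x - 1\<bar> dvd ms ! l" using Ddvd by (simp add: lms msl)
  have GG: "gcd \<bar>ms ! i\<bar> (gcd \<bar>ms ! j\<bar> \<bar>ms ! k\<bar>) = \<bar>x ^ t - 1\<bar>"
  proof -
    have "gcd \<bar>ms ! i\<bar> (gcd \<bar>ms ! j\<bar> \<bar>ms ! k\<bar>)
        = gcd (x ^ (ns ! i) - 1) (gcd (x ^ (ns ! j) - 1) (x ^ (ns ! k) - 1))"
      using assms(5,6,7) by (simp add: msl)
    also have "\<dots> = gcd (x ^ (ns ! i) - 1) (x ^ gcd (ns ! j) (ns ! k) - 1)" by (simp add: NG)
    also have "\<dots> = \<bar>x ^ t - 1\<bar>" by (simp add: NG gt)
    finally show ?thesis .
  qed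
  have GD: "\<bar>x - 1\<bar> dvd gcd \<bar>ms ! i\<bar> (gcd \<bar>ms ! j\<bar> \<bar>ms ! k\<bar>)" using GG Ddvd by simp
  have Gd: "\<forall>l<length ms. gcd \<bar>ms ! i\<bar> (gcd \<bar>ms ! j\<bar> \<bar>ms ! k\<bar>) dvd ms ! l"
    using GG tl by (simp add: lms msl)
  have iso: "(cyc_prod ms)\<lparr>carrier := kernel (cyc_prod ms) (integer_mod_group (nat \<bar>x - 1\<bar>))
            (\<lambda>a. (\<Sum>l<length ms. a l) mod \<bar>x - 1\<bar>)\<rparr>
     \<cong> cyc_prod ([gcd \<bar>ms ! i\<bar> (gcd \<bar>ms ! j\<bar> \<bar>ms ! k\<bar>) div \<bar>x - 1\<bar>,
                   lcm \<bar>ms ! i\<bar> (gcd \<bar>ms ! j\<bar> \<bar>ms ! k\<bar>),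
                   lcm \<bar>ms ! j\<bar> \<bar>ms ! k\<bar>]
                  @ map (\<lambda>l. ms ! l) (filter (\<lambda>l. l \<notin> {i, j, k}) [0..<length ms]))"
    by (rule main_abs[OF nz D0 Dd]) (use assms(5-10) GD Gd in \<open>simp_all add: lms\<close>)
  have SL: "SL_torus eps q ns = (cyc_prod ms)\<lparr>carrier := kernel (cyc_prod ms) (integer_mod_group (nat \<bar>x - 1\<bar>))
            (\<lambda>a. (\<Sum>l<length ms. a l) mod \<bar>x - 1\<bar>)\<rparr>"
    unfolding SL_torus_def GL_torus_def cyc_def torus_det_def x_def ms_def by simp
  have CP: "cyc_prod ([(x ^ t - 1) div (x - 1),
               lcm (x ^ (ns ! i) - 1) (x ^ gcd (ns ! j) (ns ! k) - 1),
               lcm (x ^ (ns ! j) - 1) (x ^ (ns ! k) - 1)]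
              @ map (\<lambda>l. x ^ (ns ! l) - 1) (filter (\<lambda>l. l \<notin> {i, j, k}) [0..<length ns]))
     = cyc_prod ([gcd \<bar>ms ! i\<bar> (gcd \<bar>ms ! j\<bar> \<bar>ms ! k\<bar>) div \<bar>x - 1\<bar>,
                   lcm \<bar>ms ! i\<bar> (gcd \<bar>ms ! j\<bar> \<bar>ms ! k\<bar>),
                   lcm \<bar>ms ! j\<bar> \<bar>ms ! k\<bar>]
                  @ map (\<lambda>l. ms ! l) (filter (\<lambda>l. l \<notin> {i, j, k}) [0..<length ms]))"
  proof (rule cyc_prod_cong)
    show "length ([(x ^ t - 1) div (x - 1),
               lcm (x ^ (ns ! i) - 1) (x ^ gcd (ns ! j) (ns ! k) - 1),
               lcm (x ^ (ns ! j) - 1) (x ^ (ns ! k) - 1)]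
              @ map (\<lambda>l. x ^ (ns ! l) - 1) (filter (\<lambda>l. l \<notin> {i, j, k}) [0..<length ns]))
      = length ([gcd \<bar>ms ! i\<bar> (gcd \<bar>ms ! j\<bar> \<bar>ms ! k\<bar>) div \<bar>x - 1\<bar>,
                   lcm \<bar>ms ! i\<bar> (gcd \<bar>ms ! j\<bar> \<bar>ms ! k\<bar>),
                   lcm \<bar>ms ! j\<bar> \<bar>ms ! k\<bar>]
                  @ map (\<lambda>l. ms ! l) (filter (\<lambda>l. l \<notin> {i, j, k}) [0..<length ms]))"
      by (simp add: lms)
    have e0: "\<bar>(x ^ t - 1) div (x - 1)\<bar> = gcd \<bar>ms ! i\<bar> (gcd \<bar>ms ! j\<bar> \<bar>ms ! k\<bar>) div \<bar>x - 1\<bar>"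
      using GG Ddvd[of t] by (simp add: abs_div)
    have e1: "\<bar>lcm (x ^ (ns ! i) - 1) (x ^ gcd (ns ! j) (ns ! k) - 1)\<bar> = lcm \<bar>ms ! i\<bar> (gcd \<bar>ms ! j\<bar> \<bar>ms ! k\<bar>)"
      using assms(5,6,7) by (simp add: msl NG)
    have e2: "\<bar>lcm (x ^ (ns ! j) - 1) (x ^ (ns ! k) - 1)\<bar> = lcm \<bar>ms ! j\<bar> \<bar>ms ! k\<bar>"
      using assms(6,7) by (simp add: msl)
    show "\<forall>l<length ([(x ^ t - 1) div (x - 1),
               lcm (x ^ (ns ! i) - 1) (x ^ gcd (ns ! j) (ns ! k) - 1),
               lcm (x ^ (ns ! j) - 1) (x ^ (ns ! k) - 1)]
              @ map (\<lambda>l. x ^ (ns ! l) - 1) (filter (\<lambda>l. l \<notin> {i, j, k}) [0..<length ns])).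
       \<bar>([(x ^ t - 1) div (x - 1),
               lcm (x ^ (ns ! i) - 1) (x ^ gcd (ns ! j) (ns ! k) - 1),
               lcm (x ^ (ns ! j) - 1) (x ^ (ns ! k) - 1)]
              @ map (\<lambda>l. x ^ (ns ! l) - 1) (filter (\<lambda>l. l \<notin> {i, j, k}) [0..<length ns])) ! l\<bar>
     = \<bar>([gcd \<bar>ms ! i\<bar> (gcd \<bar>ms ! j\<bar> \<bar>ms ! k\<bar>) div \<bar>x - 1\<bar>,
                   lcm \<bar>ms ! i\<bar> (gcd \<bar>ms ! j\<bar> \<bar>ms ! k\<bar>),
                   lcm \<bar>ms ! j\<bar> \<bar>ms ! k\<bar>]
                  @ map (\<lambda>l. ms ! l) (filter (\<lambda>l. l \<notin> {i, j, k}) [0..<length ms])) ! l\<bar>"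
    proof (intro allI impI)
      fix l
      assume l: "l < length ([(x ^ t - 1) div (x - 1),
               lcm (x ^ (ns ! i) - 1) (x ^ gcd (ns ! j) (ns ! k) - 1),
               lcm (x ^ (ns ! j) - 1) (x ^ (ns ! k) - 1)]
              @ map (\<lambda>l. x ^ (ns ! l) - 1) (filter (\<lambda>l. l \<notin> {i, j, k}) [0..<length ns]))"
      show "\<bar>([(x ^ t - 1) div (x - 1),
               lcm (x ^ (ns ! i) - 1) (x ^ gcd (ns ! j) (ns ! k) - 1),
               lcm (x ^ (ns ! j) - 1) (x ^ (ns ! k) - 1)]
              @ map (\<lambda>l. x ^ (ns ! l) - 1) (filter (\<lambda>l. l \<notin> {i, j, k}) [0..<length ns])) ! l\<bar>
     = \<bar>([gcd \<bar>ms ! i\<bar> (gcd \<bar>ms ! j\<bar> \<bar>ms ! k\<bar>) div \<bar>x - 1\<bar>,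
                   lcm \<bar>ms ! i\<bar> (gcd \<bar>ms ! j\<bar> \<bar>ms ! k\<bar>),
                   lcm \<bar>ms ! j\<bar> \<bar>ms ! k\<bar>]
                  @ map (\<lambda>l. ms ! l) (filter (\<lambda>l. l \<notin> {i, j, k}) [0..<length ms])) ! l\<bar>"
      proof (cases "l < 3")
        case True
        then have "l = 0 \<or> l = 1 \<or> l = 2" by auto
        then show ?thesis using e0 e1 e2 by (auto simp: numeral_2_eq_2)
      next
        case False
        define r where "r = l - 3"
        have r: "l = Suc (Suc (Suc r))" using False by (simp add: r_def)
        let ?os = "filter (\<lambda>l. l \<notin> {i, j, k}) [0..<length ns]"
        have rl: "r < length ?os" using l r by simp
        have "?os ! r < length ns" using nth_mem[OF rl] by auto
        then show ?thesis using r rl by (simp add: lms msl)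
      qed
    qed
  qed
  show ?thesis
    unfolding x_def[symmetric] t_def[symmetric] SL CP by (rule iso)
qed


end
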